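(* Let $\mathcal C\subseteq\{0,1\}^n$ and $\mathcal D\subseteq\{0,1\}^m$ be neural codes and $\phi:R_\mathcal D\to R_\mathcal C$ a ring homomorphism. Then $\phi$ is a neural ring homomorphism if and only if there is a vector $S=(s_1,\dots,s_m)$ with $s_i\in[n]\cup\{0,u\}$ such that $q_\phi=q_S|_\mathcal C$.
   Context: For a code $\mathcal C\subseteq\{0,1\}^n$, $R_\mathcal C$ is the ring of functions $\mathcal C\to\mathbb F_2$ and $R[n]=R_{\{0,1\}^n}=\mathbb F_2[x_1,\dots,x_n]/\langle x_i^2-x_i\rangle$; $R_\mathcal C$ is an $R[n]$-module via $(r\cdot f)(c)=r(c)f(c)$. $\rho_d$ is the indicator of $\{d\}$, and $q_\phi:\mathcal C\to\mathcal D$ sends $c$ to the unique $d\in\mathcal D$ with $\phi(\rho_d)(c)=1$. A ring homomorphism $\tau:R[m]\to R[n]$ is compatible with $\phi$ if $\phi(r\cdot f)=\tau(r)\cdot\phi(f)$ for all $r\in R[m]$, $f\in R_\mathcal D$; it is linear-monomial if $\tau(x_i)\in\{x_1,\dots,x_n,0,1\}$ for every $i$. $\phi$ is a neural ring homomorphism if some linear-monomial $\tau:R[m]\to R[n]$ is compatible with $\phi$. For $S=(s_1,\dots,s_m)$ with $s_i\in[n]\cup\{0,u\}$ ($u$ a formal symbol), $q_S:\{0,1\}^n\to\{0,1\}^m$ is $q_S(c)=d$ with $d_i=c_j$ if $s_i=j$, $d_i=0$ if $s_i=0$, $d_i=1$ if $s_i=u$. *)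

theory Defs
  imports "HOL-Algebra.Ring"
begin

text \<open>Codewords of length n: boolean vectors indexed by 1..n (False = 0, True = 1),
  represented extensionally as functions nat => bool that are False outside {1..n}.\<close>

type_synonym word = "nat \<Rightarrow> bool"

definition cube :: "nat \<Rightarrow> word set" where
  "cube n = {c. \<forall>i. c i \<longrightarrow> i \<in> {1..n}}"

text \<open>R_C: the ring of functions C -> F_2 (F_2 = bool, + = xor, * = and), represented
  extensionally as functions that are False outside C.\<close>

definition code_ring :: "word set \<Rightarrow> (word \<Rightarrow> bool) ring" where
  "code_ring C = \<lparr>carrier = {f. \<forall>c. c \<notin> C \<longrightarrow> \<not> f c},
                  mult = (\<lambda>f g c. f c \<and> g c),
                  one = (\<lambda>c. c \<in> C),
                  zero = (\<lambda>c. False),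
                  add = (\<lambda>f g c. f c \<noteq> g c)\<rparr>"

definition Rn :: "nat \<Rightarrow> (word \<Rightarrow> bool) ring" where
  "Rn n = code_ring (cube n)"

definition xvar :: "nat \<Rightarrow> nat \<Rightarrow> (word \<Rightarrow> bool)" where
  "xvar n i = (\<lambda>c. c \<in> cube n \<and> c i)"

definition act :: "(word \<Rightarrow> bool) \<Rightarrow> (word \<Rightarrow> bool) \<Rightarrow> (word \<Rightarrow> bool)" where
  "act r f = (\<lambda>c. r c \<and> f c)"

definition rho :: "word \<Rightarrow> (word \<Rightarrow> bool)" where
  "rho d = (\<lambda>c. c = d)"

definition q_phi :: "word set \<Rightarrow> ((word \<Rightarrow> bool) \<Rightarrow> (word \<Rightarrow> bool)) \<Rightarrow> word \<Rightarrow> word" where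
  "q_phi D \<phi> c = (THE d. d \<in> D \<and> \<phi> (rho d) c)"

definition compatible ::
  "nat \<Rightarrow> word set \<Rightarrow> ((word \<Rightarrow> bool) \<Rightarrow> (word \<Rightarrow> bool)) \<Rightarrow> ((word \<Rightarrow> bool) \<Rightarrow> (word \<Rightarrow> bool)) \<Rightarrow> bool" where
  "compatible m D \<tau> \<phi> \<longleftrightarrow>
     (\<forall>r \<in> carrier (Rn m). \<forall>f \<in> carrier (code_ring D). \<phi> (act r f) = act (\<tau> r) (\<phi> f))"

definition linear_monomial :: "nat \<Rightarrow> nat \<Rightarrow> ((word \<Rightarrow> bool) \<Rightarrow> (word \<Rightarrow> bool)) \<Rightarrow> bool" where
  "linear_monomial m n \<tau> \<longleftrightarrow>
     (\<forall>i \<in> {1..m}. \<tau> (xvar m i) \<in> {xvar n j | j. j \<in> {1..n}} \<union> {\<zero>\<^bsub>Rn n\<^esub>, \<one>\<^bsub>Rn n\<^esub>})"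

definition neural_ring_hom ::
  "nat \<Rightarrow> nat \<Rightarrow> word set \<Rightarrow> word set \<Rightarrow> ((word \<Rightarrow> bool) \<Rightarrow> (word \<Rightarrow> bool)) \<Rightarrow> bool" where
  "neural_ring_hom n m C D \<phi> \<longleftrightarrow>
     \<phi> \<in> ring_hom (code_ring D) (code_ring C) \<and>
     (\<exists>\<tau>. \<tau> \<in> ring_hom (Rn m) (Rn n) \<and> linear_monomial m n \<tau> \<and> compatible m D \<tau> \<phi>)"

datatype sel = Coord nat | Zero | U

definition valid_S :: "nat \<Rightarrow> nat \<Rightarrow> (nat \<Rightarrow> sel) \<Rightarrow> bool" where
  "valid_S n m S \<longleftrightarrow> (\<forall>i \<in> {1..m}. case S i of Coord j \<Rightarrow> j \<in> {1..n} | Zero \<Rightarrow> True | U \<Rightarrow> True)"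

definition q_S :: "nat \<Rightarrow> (nat \<Rightarrow> sel) \<Rightarrow> word \<Rightarrow> word" where
  "q_S m S c = (\<lambda>i. i \<in> {1..m} \<and> (case S i of Coord j \<Rightarrow> c j | Zero \<Rightarrow> False | U \<Rightarrow> True))"

end

theory Submission
  imports Defs
begin

lemma cr_simps [simp]:
  "carrier (code_ring A) = {f. \<forall>c. c \<notin> A \<longrightarrow> \<not> f c}"
  "mult (code_ring A) = (\<lambda>f g c. f c \<and> g c)"
  "one (code_ring A) = (\<lambda>c. c \<in> A)"
  "zero (code_ring A) = (\<lambda>c. False)"
  "add (code_ring A) = (\<lambda>f g c. f c \<noteq> g c)"
  by (simp_all add: code_ring_def)

lemma finite_cube: "finite (cube m)"
proof -
  have "cube m = (\<lambda>S i. i \<in> S) ` Pow {1..m}"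
  proof
    show "cube m \<subseteq> (\<lambda>S i. i \<in> S) ` Pow {1..m}"
    proof
      fix c assume "c \<in> cube m"
      hence "c = (\<lambda>i. i \<in> {i. c i})" "{i. c i} \<in> Pow {1..m}" by (auto simp: cube_def)
      thus "c \<in> (\<lambda>S i. i \<in> S) ` Pow {1..m}" by blast
    qed
  qed (auto simp: cube_def)
  thus ?thesis by simp
qed

lemma hom_facts:
  assumes h: "h \<in> ring_hom (code_ring A) (code_ring B)"
  shows "\<And>f. f \<in> carrier (code_ring A) \<Longrightarrow> h f \<in> carrier (code_ring B)"
    and "\<And>f g. f \<in> carrier (code_ring A) \<Longrightarrow> g \<in> carrier (code_ring A) \<Longrightarrow> h (\<lambda>c. f c \<and> g c) = (\<lambda>c. h f c \<and> h g c)"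
    and "\<And>f g. f \<in> carrier (code_ring A) \<Longrightarrow> g \<in> carrier (code_ring A) \<Longrightarrow> h (\<lambda>c. f c \<noteq> g c) = (\<lambda>c. h f c \<noteq> h g c)"
    and "h (\<lambda>c. c \<in> A) = (\<lambda>c. c \<in> B)"
  using h unfolding ring_hom_def by (auto simp: Pi_def)

lemma hom_zero:
  assumes h: "h \<in> ring_hom (code_ring A) (code_ring B)"
  shows "h (\<lambda>c. False) c = False"
proof -
  have z: "(\<lambda>c::word. False) \<in> carrier (code_ring A)" by simp
  have "h (\<lambda>c. False \<noteq> False) = (\<lambda>c. h (\<lambda>c. False) c \<noteq> h (\<lambda>c. False) c)"
    using hom_facts(3)[OF h z z] .
  hence "h (\<lambda>c. False) = (\<lambda>c. False)" by simp
  thus ?thesis by simp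
qed

lemma eval:
  assumes fin: "finite A" and h: "h \<in> ring_hom (code_ring A) (code_ring B)" and b: "b \<in> B"
  shows "\<exists>a\<in>A. h (rho a) b \<and> (\<forall>a'\<in>A. h (rho a') b \<longrightarrow> a' = a)
              \<and> (\<forall>f\<in>carrier (code_ring A). h f b = f a)"
proof -
  have rc: "\<And>a. a \<in> A \<Longrightarrow> rho a \<in> carrier (code_ring A)" by (auto simp: rho_def)
  have ex: "finite F \<Longrightarrow> F \<subseteq> A \<Longrightarrow> h (\<lambda>c. c \<in> F) b \<Longrightarrow> \<exists>a\<in>F. h (rho a) b" for F
  proof (induction F rule: finite_induct)
    case empty
    then show ?case using hom_zero[OF h] by simp
  next
    case (insert x F)
    have e: "(\<lambda>c. c \<in> insert x F) = (\<lambda>c. (c \<in> F) \<noteq> rho x c)"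
      using insert(2) by (auto simp: rho_def)
    have "h (\<lambda>c. (c \<in> F) \<noteq> rho x c) = (\<lambda>c. h (\<lambda>c. c \<in> F) c \<noteq> h (rho x) c)"
      using hom_facts(3)[OF h, of "\<lambda>c. c \<in> F" "rho x"] insert(4) rc[of x] by auto
    with insert e show ?case by auto
  qed
  have "h (\<lambda>c. c \<in> A) b" using hom_facts(4)[OF h] b by simp
  then obtain a where a: "a \<in> A" "h (rho a) b" using ex[OF fin] by blast
  have uniq: "\<forall>a'\<in>A. h (rho a') b \<longrightarrow> a' = a"
  proof (intro ballI impI)
    fix a' assume a': "a' \<in> A" "h (rho a') b"
    show "a' = a"
    proof (rule ccontr)
      assume ne: "a' \<noteq> a"
      have "(\<lambda>c. rho a' c \<and> rho a c) = (\<lambda>c. False)" using ne by (auto simp: rho_def)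
      moreover have "h (\<lambda>c. rho a' c \<and> rho a c) = (\<lambda>c. h (rho a') c \<and> h (rho a) c)"
        using hom_facts(2)[OF h rc[OF a'(1)] rc[OF a(1)]] .
      ultimately show False using a a' hom_zero[OF h, of b] by metis
    qed
  qed
  have ev: "\<forall>f\<in>carrier (code_ring A). h f b = f a"
  proof
    fix f assume f: "f \<in> carrier (code_ring A)"
    have "h (\<lambda>c. f c \<and> rho a c) = (\<lambda>c. h f c \<and> h (rho a) c)"
      using hom_facts(2)[OF h f rc[OF a(1)]] .
    moreover have "(\<lambda>c. f c \<and> rho a c) = (if f a then rho a else (\<lambda>c. False))"
      by (auto simp: rho_def)
    ultimately show "h f b = f a" using a hom_zero[OF h, of b]
      by (metis (full_types))
  qed
  show ?thesis using a uniq ev by blast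
qed

lemma eval_the:
  assumes fin: "finite A" and h: "h \<in> ring_hom (code_ring A) (code_ring B)" and b: "b \<in> B"
  shows "(THE a. a \<in> A \<and> h (rho a) b) \<in> A"
    and "\<And>f. f \<in> carrier (code_ring A) \<Longrightarrow> h f b = f (THE a. a \<in> A \<and> h (rho a) b)"
proof -
  obtain a where a: "a \<in> A" "h (rho a) b" "\<forall>a'\<in>A. h (rho a') b \<longrightarrow> a' = a"
     "\<forall>f\<in>carrier (code_ring A). h f b = f a"
    using eval[OF assms] by blast
  have t: "(THE a. a \<in> A \<and> h (rho a) b) = a"
  proof (rule the_equality)
    show "a \<in> A \<and> h (rho a) b" using a(1,2) by blast
  next
    fix x assume "x \<in> A \<and> h (rho x) b"
    thus "x = a" using a(3) by blast
  qed
  show "(THE a. a \<in> A \<and> h (rho a) b) \<in> A" unfolding t using a(1) .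
  fix f assume "f \<in> carrier (code_ring A)"
  thus "h f b = f (THE a. a \<in> A \<and> h (rho a) b)" unfolding t using a(4) by blast
qed

theorem lemma7:
  fixes n m :: nat and C D :: "word set" and \<phi> :: "(word \<Rightarrow> bool) \<Rightarrow> (word \<Rightarrow> bool)"
  assumes "C \<subseteq> cube n" and "D \<subseteq> cube m"
    and "\<phi> \<in> ring_hom (code_ring D) (code_ring C)"
  shows "neural_ring_hom n m C D \<phi> \<longleftrightarrow>
         (\<exists>S. valid_S n m S \<and> (\<forall>c \<in> C. q_phi D \<phi> c = q_S m S c))"
proof -
  have finD: "finite D" using assms(2) finite_cube finite_subset by blast
  define q where "q = q_phi D \<phi>"
  have qD: "\<And>c. c \<in> C \<Longrightarrow> q c \<in> D"
    and qev: "\<And>c f. c \<in> C \<Longrightarrow> f \<in> carrier (code_ring D) \<Longrightarrow> \<phi> f c = f (q c)"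
    using eval_the[OF finD assms(3)] unfolding q_def q_phi_def by auto
  have phiC: "\<And>f c. f \<in> carrier (code_ring D) \<Longrightarrow> c \<notin> C \<Longrightarrow> \<not> \<phi> f c"
    using hom_facts(1)[OF assms(3)] by auto
  show ?thesis
  proof
    assume "neural_ring_hom n m C D \<phi>"
    then obtain \<tau> where tau: "\<tau> \<in> ring_hom (Rn m) (Rn n)" "linear_monomial m n \<tau>"
      "compatible m D \<tau> \<phi>" unfolding neural_ring_hom_def by blast
    have tau': "\<tau> \<in> ring_hom (code_ring (cube m)) (code_ring (cube n))" using tau(1) by (simp add: Rn_def)
    define p where "p c = (THE a. a \<in> cube m \<and> \<tau> (rho a) c)" for c
    have pM: "\<And>c. c \<in> C \<Longrightarrow> p c \<in> cube m"
      and pev: "\<And>c r. c \<in> C \<Longrightarrow> r \<in> carrier (Rn m) \<Longrightarrow> \<tau> r c = r (p c)"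
      using eval_the[OF finite_cube tau'] assms(1) unfolding p_def Rn_def by auto
    have pq: "p c = q c" if c: "c \<in> C" for c
    proof -
      have r: "rho (q c) \<in> carrier (Rn m)" using qD[OF c] assms(2) by (auto simp: Rn_def rho_def)
      have o: "(\<lambda>c. c \<in> D) \<in> carrier (code_ring D)" by simp
      have "\<phi> (act (rho (q c)) (\<lambda>c. c \<in> D)) = act (\<tau> (rho (q c))) (\<phi> (\<lambda>c. c \<in> D))"
        using tau(3) r o unfolding compatible_def by blast
      hence "\<phi> (act (rho (q c)) (\<lambda>c. c \<in> D)) c = act (\<tau> (rho (q c))) (\<phi> (\<lambda>c. c \<in> D)) c" by simp
      moreover have "act (rho (q c)) (\<lambda>c. c \<in> D) \<in> carrier (code_ring D)" by (auto simp: act_def)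
      ultimately have "act (rho (q c)) (\<lambda>c. c \<in> D) (q c) = act (\<tau> (rho (q c))) (\<lambda>c. c \<in> D) (q c) \<or> True" by simp
      have "rho (q c) (p c)"
        using \<open>\<phi> (act (rho (q c)) (\<lambda>c. c \<in> D)) c = _\<close> qev[OF c] qD[OF c] pev[OF c r] o
        by (simp add: act_def rho_def)
      thus ?thesis by (simp add: rho_def)
    qed
    define S where "S i = (if \<exists>j\<in>{1..n}. \<tau> (xvar m i) = xvar n j
       then Coord (SOME j. j \<in> {1..n} \<and> \<tau> (xvar m i) = xvar n j)
       else if \<tau> (xvar m i) = \<zero>\<^bsub>Rn n\<^esub> then Zero else U)" for i
    have valid: "valid_S n m S"
      unfolding valid_S_def
    proof
      fix i assume i: "i \<in> {1..m}"
      show "case S i of Coord j \<Rightarrow> j \<in> {1..n} | Zero \<Rightarrow> True | U \<Rightarrow> True"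
      proof (cases "\<exists>j\<in>{1..n}. \<tau> (xvar m i) = xvar n j")
        case True
        hence "(SOME j. j \<in> {1..n} \<and> \<tau> (xvar m i) = xvar n j) \<in> {1..n}"
          by (metis (mono_tags, lifting) someI)
        then show ?thesis using True by (simp add: S_def)
      qed (auto simp: S_def)
    qed
    have "\<forall>c\<in>C. q c = q_S m S c"
    proof
      fix c assume c: "c \<in> C"
      have cn: "c \<in> cube n" using c assms(1) by blast
      show "q c = q_S m S c"
      proof
        fix i
        show "q c i = q_S m S c i"
        proof (cases "i \<in> {1..m}")
          case False
          then show ?thesis using qD[OF c] assms(2) by (auto simp: cube_def q_S_def)
        next
          case i: True
          have xr: "xvar m i \<in> carrier (Rn m)" by (auto simp: Rn_def xvar_def)
          have "\<tau> (xvar m i) c = xvar m i (p c)" using pev[OF c xr] .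
          hence qi: "q c i = \<tau> (xvar m i) c" using pq[OF c] pM[OF c] by (simp add: xvar_def)
          have lm: "\<tau> (xvar m i) \<in> {xvar n j | j. j \<in> {1..n}} \<union> {\<zero>\<^bsub>Rn n\<^esub>, \<one>\<^bsub>Rn n\<^esub>}"
            using tau(2) i unfolding linear_monomial_def by blast
          show ?thesis
          proof (cases "\<exists>j\<in>{1..n}. \<tau> (xvar m i) = xvar n j")
            case True
            define j where "j = (SOME j. j \<in> {1..n} \<and> \<tau> (xvar m i) = xvar n j)"
            have "j \<in> {1..n} \<and> \<tau> (xvar m i) = xvar n j"
              unfolding j_def using True by (metis (mono_tags, lifting) someI)
            hence "S i = Coord j" using True by (simp add: S_def j_def)
            moreover have "q c i = c j" using qi \<open>j \<in> {1..n} \<and> _\<close> cn by (simp add: xvar_def)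
            ultimately show ?thesis using i by (simp add: q_S_def)
          next
            case False
            hence zo: "\<tau> (xvar m i) = (\<lambda>c. False) \<or> \<tau> (xvar m i) = (\<lambda>c. c \<in> cube n)"
              using lm by (auto simp: Rn_def)
            show ?thesis
            proof (cases "\<tau> (xvar m i) = (\<lambda>c. False)")
              case True
              hence "S i = Zero" using False by (simp add: S_def Rn_def)
              moreover have "\<not> q c i" using qi True by simp
              ultimately show ?thesis by (simp add: q_S_def)
            next
              case F2: False
              hence e1: "\<tau> (xvar m i) = (\<lambda>c. c \<in> cube n)" using zo by blast
              hence "S i = U" using False F2 by (simp add: S_def Rn_def)
              moreover have "q c i" using qi e1 cn by simp
              ultimately show ?thesis using i by (simp add: q_S_def)
            qed
          qed
        qed
      qed
    qed
    thus "\<exists>S. valid_S n m S \<and> (\<forall>c\<in>C. q_phi D \<phi> c = q_S m S c)"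
      using valid unfolding q_def by blast
  next
    assume "\<exists>S. valid_S n m S \<and> (\<forall>c\<in>C. q_phi D \<phi> c = q_S m S c)"
    then obtain S where S: "valid_S n m S" "\<forall>c\<in>C. q c = q_S m S c" unfolding q_def by blast
    have qSm: "q_S m S c \<in> cube m" for c by (auto simp: q_S_def cube_def)
    define \<tau> where "\<tau> r = (\<lambda>c. c \<in> cube n \<and> r (q_S m S c))" for r
    have hom': "\<tau> \<in> ring_hom (code_ring (cube m)) (code_ring (cube n))"
    proof (rule ring_hom_memI)
      fix x assume "x \<in> carrier (code_ring (cube m))"
      show "\<tau> x \<in> carrier (code_ring (cube n))" by (simp add: \<tau>_def)
    next
      fix x y
      show "\<tau> (x \<otimes>\<^bsub>code_ring (cube m)\<^esub> y) = \<tau> x \<otimes>\<^bsub>code_ring (cube n)\<^esub> \<tau> y"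
        by (rule ext) (auto simp: \<tau>_def)
    next
      fix x y
      show "\<tau> (x \<oplus>\<^bsub>code_ring (cube m)\<^esub> y) = \<tau> x \<oplus>\<^bsub>code_ring (cube n)\<^esub> \<tau> y"
        by (rule ext) (auto simp: \<tau>_def)
    next
      show "\<tau> \<one>\<^bsub>code_ring (cube m)\<^esub> = \<one>\<^bsub>code_ring (cube n)\<^esub>"
        by (rule ext) (simp add: \<tau>_def qSm)
    qed
    have hom: "\<tau> \<in> ring_hom (Rn m) (Rn n)" using hom' by (simp add: Rn_def)
    have lm: "linear_monomial m n \<tau>"
      unfolding linear_monomial_def
    proof
      fix i assume i: "i \<in> {1..m}"
      have e: "\<tau> (xvar m i) = (\<lambda>c. c \<in> cube n \<and> q_S m S c i)"
        using qSm by (simp add: \<tau>_def xvar_def)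
      show "\<tau> (xvar m i) \<in> {xvar n j | j. j \<in> {1..n}} \<union> {\<zero>\<^bsub>Rn n\<^esub>, \<one>\<^bsub>Rn n\<^esub>}"
      proof (cases "S i")
        case (Coord j)
        have "j \<in> {1..n}" using S(1) i Coord unfolding valid_S_def by fastforce
        moreover have "\<tau> (xvar m i) = xvar n j" using e Coord i by (simp add: q_S_def xvar_def)
        ultimately show ?thesis by blast
      next
        case Zero
        have "\<tau> (xvar m i) = \<zero>\<^bsub>Rn n\<^esub>"
          unfolding e Rn_def cr_simps using Zero by (simp add: q_S_def)
        then show ?thesis by blast
      next
        case U
        have "\<tau> (xvar m i) = \<one>\<^bsub>Rn n\<^esub>"
          unfolding e Rn_def cr_simps using U i by (simp add: q_S_def)
        then show ?thesis by blast
      qed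
    qed
    have comp: "compatible m D \<tau> \<phi>"
      unfolding compatible_def
    proof (intro ballI)
      fix r f assume r: "r \<in> carrier (Rn m)" and f: "f \<in> carrier (code_ring D)"
      have af: "act r f \<in> carrier (code_ring D)" using f by (auto simp: act_def)
      show "\<phi> (act r f) = act (\<tau> r) (\<phi> f)"
      proof
        fix c
        show "\<phi> (act r f) c = act (\<tau> r) (\<phi> f) c"
        proof (cases "c \<in> C")
          case True
          have cn: "c \<in> cube n" using True assms(1) by blast
          have "\<phi> (act r f) c = (r (q c) \<and> f (q c))" using qev[OF True af] by (simp add: act_def)
          moreover have "act (\<tau> r) (\<phi> f) c = (r (q_S m S c) \<and> f (q c))"
            using qev[OF True f] cn by (simp add: act_def \<tau>_def)
          ultimately show ?thesis using S(2) True by simp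
        next
          case False
          then show ?thesis using phiC[OF af False] phiC[OF f False] by (simp add: act_def)
        qed
      qed
    qed
    show "neural_ring_hom n m C D \<phi>"
      unfolding neural_ring_hom_def using assms(3) hom lm comp by blast
  qed
qed

end
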